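(* Let $n$ and $r$ be positive integers with $\frac{25}{9}r-1\le n<\frac{14}{5}r-1$. Then $\rho_2(K(n,r))=4$.
   Context: For integers $n\ge 2r$, the Kneser graph $K(n,r)$ has as vertices the $r$-element subsets of $[n]=\{1,\dots,n\}$, two vertices being adjacent iff they are disjoint. A $2$-packing of a graph $G$ is a set of vertices pairwise at distance at least $3$ in $G$; $\rho_2(G)$ is the maximum cardinality of a $2$-packing. *)

theory Defs
  imports Complex_Main
begin

definition kneser_vertices :: "nat \<Rightarrow> nat \<Rightarrow> nat set set" where
  "kneser_vertices n r = {A. A \<subseteq> {1..n} \<and> card A = r}"

definition kneser_adj :: "nat set \<Rightarrow> nat set \<Rightarrow> bool" where
  "kneser_adj A B \<longleftrightarrow> A \<inter> B = {}"

text \<open>A walk of length k from u to v in the graph (V, E): list of k+1 vertices.\<close>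
definition is_walk :: "'a set \<Rightarrow> ('a \<Rightarrow> 'a \<Rightarrow> bool) \<Rightarrow> 'a list \<Rightarrow> bool" where
  "is_walk V E ws \<longleftrightarrow> ws \<noteq> [] \<and> set ws \<subseteq> V \<and>
     (\<forall>i. Suc i < length ws \<longrightarrow> E (ws ! i) (ws ! Suc i))"

definition dist_ge :: "'a set \<Rightarrow> ('a \<Rightarrow> 'a \<Rightarrow> bool) \<Rightarrow> nat \<Rightarrow> 'a \<Rightarrow> 'a \<Rightarrow> bool" where
  "dist_ge V E d u v \<longleftrightarrow>
     \<not> (\<exists>ws. is_walk V E ws \<and> hd ws = u \<and> last ws = v \<and> length ws - 1 < d)"

definition is_2packing :: "'a set \<Rightarrow> ('a \<Rightarrow> 'a \<Rightarrow> bool) \<Rightarrow> 'a set \<Rightarrow> bool" where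
  "is_2packing V E P \<longleftrightarrow> P \<subseteq> V \<and>
     (\<forall>u\<in>P. \<forall>v\<in>P. u \<noteq> v \<longrightarrow> dist_ge V E 3 u v)"

definition rho2 :: "'a set \<Rightarrow> ('a \<Rightarrow> 'a \<Rightarrow> bool) \<Rightarrow> nat" where
  "rho2 V E = Max (card ` {P. is_2packing V E P})"

end

theory Submission
  imports Defs
begin

lemma bonf:
  assumes "finite F" "\<forall>A\<in>F. finite A \<and> card A = r"
    "\<forall>A\<in>F. \<forall>B\<in>F. A \<noteq> B \<longrightarrow> card (A \<inter> B) \<le> s"
  shows "2*r*card F \<le> 2*card (\<Union>F) + s*(card F*(card F - 1))"
  using assms
proof (induction F rule: finite_induct)
  case empty then show ?case by simp
next
  case (insert A F)
  let ?k = "card F"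
  have fA: "finite A" "card A = r" using insert.prems by auto
  have fU: "finite (\<Union>F)" using insert.prems insert.hyps(1) by auto
  have IH: "2*r*?k \<le> 2*card (\<Union>F) + s*(?k*(?k - 1))" using insert.IH insert.prems by auto
  have "A \<inter> \<Union>F = (\<Union>B\<in>F. A \<inter> B)" by auto
  hence "card (A \<inter> \<Union>F) \<le> (\<Sum>B\<in>F. card (A \<inter> B))" using card_UN_le[OF insert.hyps(1), of "\<lambda>B. A \<inter> B"] by simp
  also have "\<dots> \<le> (\<Sum>B\<in>F. s)"
    apply (rule sum_mono) using insert.prems insert.hyps(2) by (metis insertCI)
  finally have ci: "card (A \<inter> \<Union>F) \<le> s * ?k" by (simp add: mult.commute)
  have cu: "card A + card (\<Union>F) = card (A \<union> \<Union>F) + card (A \<inter> \<Union>F)"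
    using card_Un_Int[OF fA(1) fU] .
  have ck: "card (insert A F) = ?k + 1" using insert.hyps by simp
  have kk: "s*((?k+1)*?k) = s*(?k*(?k-1)) + 2*(s*?k)"
  proof -
    have "(?k+1)*?k = ?k*(?k-1) + 2*?k" by (cases ?k) auto
    thus ?thesis by (simp add: algebra_simps)
  qed
  have kk2: "s*((?k+1)*(?k+1-1)) = s*(?k*(?k-1)) + 2*(s*?k)" using kk by simp
  have rr: "2*r*(?k+1) = 2*r*?k + 2*r" by simp
  have ui: "\<Union>(insert A F) = A \<union> \<Union>F" by simp
  show ?case unfolding ck kk2 rr ui using IH ci cu fA(2) by linarith
qed

lemma walk3:
  assumes "u \<in> kneser_vertices n r" "v \<in> kneser_vertices n r" "u \<noteq> v" "u \<inter> v \<noteq> {}"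
    "n < card (u \<union> v) + r" "0 < r"
  shows "dist_ge (kneser_vertices n r) kneser_adj 3 u v"
  unfolding dist_ge_def
proof
  assume "\<exists>ws. is_walk (kneser_vertices n r) kneser_adj ws \<and> hd ws = u \<and> last ws = v \<and> length ws - 1 < 3"
  then obtain ws where w: "is_walk (kneser_vertices n r) kneser_adj ws" "hd ws = u" "last ws = v" "length ws \<le> 3"
    by auto
  have ne: "ws \<noteq> []" and sub: "set ws \<subseteq> kneser_vertices n r"
    and ad: "\<And>i. Suc i < length ws \<Longrightarrow> kneser_adj (ws!i) (ws!Suc i)"
    using w(1) unfolding is_walk_def by auto
  have "length ws \<noteq> 0" using ne by simp
  then consider "length ws = 1" | "length ws = 2" | "length ws = 3" using w(4)
    by linarith
  then show False
  proof cases
    case 1 then obtain x where "ws = [x]" by (cases ws) auto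
    then show False using w assms(3) by simp
  next
    case 2 then obtain x y where "ws = [x,y]" by (cases ws; cases "tl ws") auto
    then show False using w ad[of 0] assms(4) by (simp add: kneser_adj_def)
  next
    case 3 then obtain x y z where ws: "ws = [x,y,z]"
      by (cases ws; cases "tl ws"; cases "tl (tl ws)") auto
    have "kneser_adj u y" "kneser_adj y v" using ad[of 0] ad[of 1] ws w by auto
    hence yd: "y \<subseteq> {1..n} - (u \<union> v)" using sub ws
      by (auto simp: kneser_adj_def kneser_vertices_def)
    have "card y = r" using sub ws by (auto simp: kneser_vertices_def)
    hence "r \<le> card ({1..n} - (u \<union> v))" using card_mono[OF _ yd] by simp
    also have "\<dots> = n - card (u \<union> v)"
      using assms(1,2) by (subst card_Diff_subset) (auto simp: kneser_vertices_def intro: finite_subset)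
    finally show False using assms(5,6) by linarith
  qed
qed

lemma walk3_conv:
  assumes "u \<in> kneser_vertices n r" "v \<in> kneser_vertices n r"
    "dist_ge (kneser_vertices n r) kneser_adj 3 u v"
  shows "n < card (u \<union> v) + r"
proof (rule ccontr)
  assume nt: "\<not> n < card (u \<union> v) + r"
  have "card ({1..n} - (u \<union> v)) = n - card (u \<union> v)"
    using assms(1,2) by (subst card_Diff_subset) (auto simp: kneser_vertices_def intro: finite_subset)
  hence "r \<le> card ({1..n} - (u \<union> v))" using nt by linarith
  then obtain w where w: "w \<subseteq> {1..n} - (u \<union> v)" "card w = r"
    using obtain_subset_with_card_n by metis
  have wv: "w \<in> kneser_vertices n r" using w by (auto simp: kneser_vertices_def)
  have "is_walk (kneser_vertices n r) kneser_adj [u,w,v]"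
    unfolding is_walk_def using assms wv w(1)
    by (auto simp: kneser_adj_def less_Suc_eq nth_Cons split: nat.splits)
  thus False using assms(3) unfolding dist_ge_def by force
qed

lemma pair_ok:
  assumes "u \<in> kneser_vertices n r" "v \<in> kneser_vertices n r" "u \<noteq> v"
    "card (u \<inter> v) = a" "1 \<le> a" "a + n + 1 \<le> 3*r"
  shows "dist_ge (kneser_vertices n r) kneser_adj 3 u v"
proof (rule walk3[OF assms(1,2,3)])
  have fu: "finite u" "finite v" "card u = r" "card v = r" using assms(1,2)
    by (auto simp: kneser_vertices_def intro: finite_subset)
  show "u \<inter> v \<noteq> {}" using assms(4,5) by auto
  show "n < card (u \<union> v) + r" using card_Un_Int[OF fu(1,2)] fu assms(4,6) by linarith
  show "0 < r" using assms(5,6) by linarith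
qed

lemma upper:
  assumes "is_2packing (kneser_vertices n r) kneser_adj P"
    "25*r \<le> 9*n + 9" "n + 1 < 3*r"
  shows "card P \<le> 4"
proof (rule ccontr)
  assume "\<not> card P \<le> 4"
  hence c5: "5 \<le> card P" by simp
  have PV: "P \<subseteq> kneser_vertices n r" using assms(1) by (simp add: is_2packing_def)
  have finV: "finite (kneser_vertices n r)"
    by (rule finite_subset[of _ "Pow {1..n}"]) (auto simp: kneser_vertices_def)
  have finP: "finite P" using finite_subset[OF PV finV] .
  obtain Q where Q: "Q \<subseteq> P" "card Q = 5" using obtain_subset_with_card_n[OF c5] by metis
  have finQ: "finite Q" using finite_subset[OF Q(1) finP] .
  define s where "s = 3*r - n - 1"
  have QV: "\<And>A. A \<in> Q \<Longrightarrow> A \<subseteq> {1..n} \<and> card A = r" using Q(1) PV by (auto simp: kneser_vertices_def)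
  have h1: "\<forall>A\<in>Q. finite A \<and> card A = r" using QV by (auto intro: finite_subset)
  have h2: "\<forall>A\<in>Q. \<forall>B\<in>Q. A \<noteq> B \<longrightarrow> card (A \<inter> B) \<le> s"
  proof (intro ballI impI)
    fix A B assume AB: "A \<in> Q" "B \<in> Q" "A \<noteq> B"
    have "dist_ge (kneser_vertices n r) kneser_adj 3 A B"
      using assms(1) AB Q(1) unfolding is_2packing_def by blast
    hence "n < card (A \<union> B) + r" using walk3_conv AB Q(1) PV by blast
    moreover have "card A + card B = card (A \<union> B) + card (A \<inter> B)"
      using card_Un_Int h1 AB by blast
    ultimately show "card (A \<inter> B) \<le> s" using h1 AB unfolding s_def by auto
  qed
  have b: "2*r*card Q \<le> 2*card (\<Union>Q) + s*(card Q*(card Q - 1))" using bonf[OF finQ h1 h2] .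
  have "\<Union>Q \<subseteq> {1..n}" using QV by auto
  hence "card (\<Union>Q) \<le> n" using card_mono[of "{1..n}"] by fastforce
  with b Q(2) have "10*r \<le> 2*n + 20*s" by simp
  thus False using assms(2,3) unfolding s_def by linarith
qed

lemma card_ioc2: "b \<le> c \<Longrightarrow> card ({a<..b::nat} \<union> {c<..d}) = (b - a) + (d - c)"
  by (subst card_Un_disjoint) auto

lemma card_ioc3: "b \<le> c \<Longrightarrow> c \<le> d \<Longrightarrow> d \<le> e \<Longrightarrow> card ({a<..b::nat} \<union> {c<..d} \<union> {e<..f}) = (b - a) + (d - c) + (f - e)"
  by (subst card_Un_disjoint) (auto simp: card_ioc2)

lemma card_ioc4: "b \<le> c \<Longrightarrow> c \<le> d \<Longrightarrow> d \<le> e \<Longrightarrow> e \<le> f \<Longrightarrow> f \<le> g \<Longrightarrow>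
  card ({a<..b::nat} \<union> {c<..d} \<union> {e<..f} \<union> {g<..h}) = (b - a) + (d - c) + (f - e) + (h - g)"
  by (subst card_Un_disjoint) (auto simp: card_ioc3)

lemma construction:
  fixes a m n r :: nat
  assumes "1 \<le> a" "m = r - 3*a" "3*a \<le> r" "6*a + 4*m \<le> n"
  shows "\<exists>P. P \<subseteq> kneser_vertices n r \<and> card P = 4 \<and>
     (\<forall>u\<in>P. \<forall>v\<in>P. u \<noteq> v \<longrightarrow> card (u \<inter> v) = a)"
proof -
  define A1 :: "nat set" where "A1 = {0<..3*a} \<union> {6*a<..6*a+m}"
  define A2 :: "nat set" where "A2 = {0<..a} \<union> {3*a<..5*a} \<union> {6*a+m<..6*a+2*m}"
  define A3 :: "nat set" where "A3 = {a<..2*a} \<union> {3*a<..4*a} \<union> {5*a<..6*a} \<union> {6*a+2*m<..6*a+3*m}"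
  define A4 :: "nat set" where "A4 = {2*a<..3*a} \<union> {4*a<..6*a} \<union> {6*a+3*m<..6*a+4*m}"
  have c1: "card A1 = r" unfolding A1_def using assms by (subst card_ioc2) auto
  have c2: "card A2 = r" unfolding A2_def using assms by (subst card_ioc3) auto
  have c3: "card A3 = r" unfolding A3_def using assms by (subst card_ioc4) auto
  have c4: "card A4 = r" unfolding A4_def using assms by (subst card_ioc3) auto
  have i12: "A1 \<inter> A2 = {0<..a}" unfolding A1_def A2_def using assms by auto
  have i13: "A1 \<inter> A3 = {a<..2*a}" unfolding A1_def A3_def using assms by auto
  have i14: "A1 \<inter> A4 = {2*a<..3*a}" unfolding A1_def A4_def using assms by auto
  have i23: "A2 \<inter> A3 = {3*a<..4*a}" unfolding A2_def A3_def using assms by auto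
  have i24: "A2 \<inter> A4 = {4*a<..5*a}" unfolding A2_def A4_def using assms by auto
  have i34: "A3 \<inter> A4 = {5*a<..6*a}" unfolding A3_def A4_def using assms by auto
  have ar: "a < r" using assms by linarith
  have neq: "\<And>X Y Z. X \<inter> Y = Z \<Longrightarrow> card X = r \<Longrightarrow> card Z < r \<Longrightarrow> X \<noteq> Y" by auto
  have ne: "A1 \<noteq> A2" "A1 \<noteq> A3" "A1 \<noteq> A4" "A2 \<noteq> A3" "A2 \<noteq> A4" "A3 \<noteq> A4"
    using neq[OF i12 c1] neq[OF i13 c1] neq[OF i14 c1] neq[OF i23 c2] neq[OF i24 c2] neq[OF i34 c3] ar by auto
  have sub: "A1 \<subseteq> {1..n}" "A2 \<subseteq> {1..n}" "A3 \<subseteq> {1..n}" "A4 \<subseteq> {1..n}"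
    unfolding A1_def A2_def A3_def A4_def using assms by auto
  define P where "P = {A1, A2, A3, A4}"
  have "P \<subseteq> kneser_vertices n r" unfolding P_def kneser_vertices_def using sub c1 c2 c3 c4 by auto
  moreover have "card P = 4" unfolding P_def using ne by auto
  moreover have "\<forall>u\<in>P. \<forall>v\<in>P. u \<noteq> v \<longrightarrow> card (u \<inter> v) = a"
    unfolding P_def using i12 i13 i14 i23 i24 i34 by (auto simp: Int_commute)
  ultimately show ?thesis by blast
qed

theorem corollary4p10:
  fixes n r :: nat
  assumes "0 < n" "0 < r"
    and "25 / 9 * real r - 1 \<le> real n" "real n < 14 / 5 * real r - 1"
  shows "rho2 (kneser_vertices n r) kneser_adj = 4"
proof -
  have "real (25*r) \<le> real (9*n + 9)" using assms(3) by simp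
  hence h1: "25*r \<le> 9*n + 9" by linarith
  have "real (5*n + 5) < real (14*r)" using assms(4) by simp
  hence h2: "5*n + 5 < 14*r" by linarith
  define s where "s = 3*r - n - 1"
  have n3: "n + 1 < 3*r" using h2 by linarith
  have s1: "1 \<le> s" "3*s \<le> r" "6*s + 4*(r - 3*s) \<le> n" "s + n + 1 \<le> 3*r"
    using h1 h2 n3 unfolding s_def by arith+
  obtain P where P: "P \<subseteq> kneser_vertices n r" "card P = 4"
    "\<forall>u\<in>P. \<forall>v\<in>P. u \<noteq> v \<longrightarrow> card (u \<inter> v) = s"
    using construction[OF s1(1) refl s1(2,3)] by blast
  have pk: "is_2packing (kneser_vertices n r) kneser_adj P"
    unfolding is_2packing_def
  proof (intro conjI ballI impI)
    show "P \<subseteq> kneser_vertices n r" using P(1) .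
    fix u v assume uv: "u \<in> P" "v \<in> P" "u \<noteq> v"
    show "dist_ge (kneser_vertices n r) kneser_adj 3 u v"
      by (rule pair_ok[OF _ _ uv(3) _ s1(1) s1(4)]) (use uv P in auto)
  qed
  have finV: "finite (kneser_vertices n r)"
    by (rule finite_subset[of _ "Pow {1..n}"]) (auto simp: kneser_vertices_def)
  have "finite {P. is_2packing (kneser_vertices n r) kneser_adj P}"
    by (rule finite_subset[of _ "Pow (kneser_vertices n r)"]) (auto simp: is_2packing_def finV)
  then show ?thesis unfolding rho2_def
  proof (intro Max_eqI)
    show "4 \<in> card ` {P. is_2packing (kneser_vertices n r) kneser_adj P}"
      using pk P(2) by (metis (mono_tags, lifting) image_eqI mem_Collect_eq)
  next
    fix y assume "y \<in> card ` {P. is_2packing (kneser_vertices n r) kneser_adj P}"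
    then obtain Q where "is_2packing (kneser_vertices n r) kneser_adj Q" "y = card Q" by blast
    thus "y \<le> 4" using upper[OF _ h1 n3] by simp
  qed simp
qed

end
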